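(* Let $T$ be a conservative ergodic invertible measure-preserving transformation of $(X,\mathcal B,\mu)$. If $T$ is subsequence weakly rationally ergodic and $S$ is an invertible nonsingular transformation with $ST=TS$, then $S$ is measure-preserving. In particular $T$ is not squashable.
   Context: $(X,\mathcal B,\mu)$ is a standard Borel space with nonatomic $\sigma$-finite measure. $S$ is invertible nonsingular if it is invertible, measurable, and $\mu(A)=0\iff\mu(SA)=0$. $T$ is squashable if it commutes with some invertible nonsingular $S$ that is not measure-preserving. For $F$ of positive finite measure, $u_k(F)=\mu(F\cap T^kF)/\mu(F)^2$, $a_n(F)=\sum_{k=0}^{n-1}u_k(F)$. $T$ is subsequence weakly rationally ergodic if there are a sequence $n_i\to\infty$ and a set $F$ of positive finite measure with $\mu(X\setminus\bigcup_{i\ge0}T^iF)=0$ such that for all measurable $A,B\subseteq F$, $\frac{1}{a_{n_i}(F)}\sum_{k=0}^{n_i-1}\mu(A\cap T^kB)\to\mu(A)\mu(B)$. *)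

theory Defs
  imports "HOL-Analysis.Analysis"
begin

definition standard_borel_space :: "('a::polish_space) measure \<Rightarrow> bool" where
  "standard_borel_space M \<longleftrightarrow> space M = UNIV \<and> sets M = sets borel"

definition nonatomic :: "'a measure \<Rightarrow> bool" where
  "nonatomic M \<longleftrightarrow> \<not> (\<exists>A\<in>sets M. emeasure M A > 0 \<and>
      (\<forall>B\<in>sets M. B \<subseteq> A \<longrightarrow> emeasure M B = 0 \<or> emeasure M (A - B) = 0))"

definition invertible_map :: "'a measure \<Rightarrow> ('a \<Rightarrow> 'a) \<Rightarrow> bool" where
  "invertible_map M S \<longleftrightarrow> bij_betw S (space M) (space M) \<and> S \<in> measurable M M
      \<and> the_inv_into (space M) S \<in> measurable M M"

definition nonsingular :: "'a measure \<Rightarrow> ('a \<Rightarrow> 'a) \<Rightarrow> bool" where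
  "nonsingular M S \<longleftrightarrow> invertible_map M S \<and>
     (\<forall>A\<in>sets M. emeasure M A = 0 \<longleftrightarrow> emeasure M (S ` A) = 0)"

definition measure_preserving :: "'a measure \<Rightarrow> ('a \<Rightarrow> 'a) \<Rightarrow> bool" where
  "measure_preserving M S \<longleftrightarrow> S \<in> measurable M M \<and>
     (\<forall>A\<in>sets M. emeasure M (S -` A \<inter> space M) = emeasure M A)"

definition conservative :: "'a measure \<Rightarrow> ('a \<Rightarrow> 'a) \<Rightarrow> bool" where
  "conservative M T \<longleftrightarrow> (\<forall>W\<in>sets M.
     (\<forall>n m. n \<noteq> m \<longrightarrow> ((T^^n) -` W) \<inter> ((T^^m) -` W) \<inter> space M = {})
       \<longrightarrow> emeasure M W = 0)"

definition ergodic :: "'a measure \<Rightarrow> ('a \<Rightarrow> 'a) \<Rightarrow> bool" where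
  "ergodic M T \<longleftrightarrow> (\<forall>A\<in>sets M. T -` A \<inter> space M = A \<longrightarrow>
     emeasure M A = 0 \<or> emeasure M (space M - A) = 0)"

definition squashable :: "'a measure \<Rightarrow> ('a \<Rightarrow> 'a) \<Rightarrow> bool" where
  "squashable M T \<longleftrightarrow> (\<exists>S. nonsingular M S \<and> (\<forall>x\<in>space M. S (T x) = T (S x))
     \<and> \<not> measure_preserving M S)"

definition u_seq :: "'a measure \<Rightarrow> ('a \<Rightarrow> 'a) \<Rightarrow> 'a set \<Rightarrow> nat \<Rightarrow> real" where
  "u_seq M T F k = measure M (F \<inter> (T^^k) ` F) / (measure M F)^2"

definition a_seq :: "'a measure \<Rightarrow> ('a \<Rightarrow> 'a) \<Rightarrow> 'a set \<Rightarrow> nat \<Rightarrow> real" where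
  "a_seq M T F n = (\<Sum>k<n. u_seq M T F k)"

definition subseq_weakly_rationally_ergodic :: "'a measure \<Rightarrow> ('a \<Rightarrow> 'a) \<Rightarrow> bool" where
  "subseq_weakly_rationally_ergodic M T \<longleftrightarrow>
    (\<exists>(n::nat \<Rightarrow> nat) F. filterlim n at_top sequentially \<and> F \<in> sets M \<and>
       0 < emeasure M F \<and> emeasure M F < \<infinity> \<and>
       emeasure M (space M - (\<Union>i. (T^^i) ` F)) = 0 \<and>
       (\<forall>A B. A \<in> sets M \<longrightarrow> B \<in> sets M \<longrightarrow> A \<subseteq> F \<longrightarrow> B \<subseteq> F \<longrightarrow>
          (\<lambda>i. (1 / a_seq M T F (n i)) * (\<Sum>k<n i. measure M (A \<inter> (T^^k) ` B)))
            \<longlonglongrightarrow> measure M A * measure M B))"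

end

theory Submission
  imports Defs
begin


lemma funpow_measurable: "f \<in> measurable M M \<Longrightarrow> f^^n \<in> measurable M M"
  by (induction n) (auto intro: measurable_comp simp del: funpow.simps simp: funpow_Suc_right)

lemma bij_image_vimage: "bij g \<Longrightarrow> g ` B = the_inv_into UNIV g -` B"
  apply (auto simp: bij_def the_inv_into_f_f)
  by (metis UNIV_I f_the_inv_into_f image_eqI)

lemma funpow_image_vimage:
  fixes T :: "'a \<Rightarrow> 'a" assumes "bij T" shows "(T^^k) ` B = (the_inv_into UNIV T ^^ k) -` B"
proof (induction k arbitrary: B)
  case 0 then show ?case by simp
next
  case (Suc k)
  have "(T^^Suc k) ` B = T ` ((T^^k) ` B)" by (simp add: image_comp)
  also have "\<dots> = the_inv_into UNIV T -` ((the_inv_into UNIV T ^^ k) -` B)"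
    using Suc bij_image_vimage[OF assms] by simp
  also have "\<dots> = (the_inv_into UNIV T ^^ Suc k) -` B" by (simp del: funpow.simps add: funpow_Suc_right vimage_comp)
  finally show ?case .
qed

lemma comm_image_vimage:
  assumes "bij P" "bij Q" "\<And>x. P (Q x) = Q (P x)"
  shows "Q ` (P -` X) = P -` (Q ` X)"
proof (intro set_eqI iffI)
  fix y assume "y \<in> Q ` (P -` X)"
  then show "y \<in> P -` (Q ` X)" using assms(3) by auto
next
  fix y assume "y \<in> P -` (Q ` X)"
  then obtain z where z: "z \<in> X" "P y = Q z" by auto
  obtain x where x: "z = P x" using assms(1) by (metis bij_pointE)
  have "P y = P (Q x)" using z x assms(3) by simp
  then have "y = Q x" using assms(1) by (simp add: bij_def inj_eq)
  then show "y \<in> Q ` (P -` X)" using x z by auto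
qed

lemma funpow_comm: "(\<And>x. P (Q x) = Q (P x)) \<Longrightarrow> P ((Q^^k) x) = (Q^^k) (P x)"
  by (induction k) auto

lemma mp_funpow:
  assumes "measure_preserving M T" "space M = UNIV"
  shows "measure_preserving M (T^^n)"
proof (induction n)
  case 0 then show ?case using assms by (simp add: measure_preserving_def)
next
  case (Suc n)
  have m: "T \<in> measurable M M" using assms by (simp add: measure_preserving_def)
  have mn: "T^^n \<in> measurable M M" by (rule funpow_measurable[OF m])
  show ?case unfolding measure_preserving_def
  proof (intro conjI ballI)
    show "T ^^ Suc n \<in> M \<rightarrow>\<^sub>M M" using funpow_measurable[OF m] by blast
    fix A assume A: "A \<in> sets M"
    have "(T ^^ Suc n) -` A \<inter> space M = T -` ((T^^n) -` A \<inter> space M) \<inter> space M"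
      using assms(2) by (simp add: vimage_comp funpow_Suc_right del: funpow.simps)
    moreover have "(T^^n) -` A \<inter> space M \<in> sets M" using mn A by (rule measurable_sets)
    ultimately have "emeasure M ((T ^^ Suc n) -` A \<inter> space M) = emeasure M ((T^^n) -` A \<inter> space M)"
      using assms(1) by (simp only: measure_preserving_def)
    also have "\<dots> = emeasure M A" using Suc A by (simp add: measure_preserving_def)
    finally show "emeasure M ((T ^^ Suc n) -` A \<inter> space M) = emeasure M A" .
  qed
qed

lemma distr_mp:
  assumes "measure_preserving M T" "space M = UNIV"
  shows "distr M M T = M"
proof (rule measure_eqI)
  show "sets (distr M M T) = sets M" by simp
  fix A assume "A \<in> sets (distr M M T)"
  then show "emeasure (distr M M T) A = emeasure M A"
    using assms by (simp add: emeasure_distr measure_preserving_def)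
qed

lemma main_mp:
  fixes M :: "'a measure" and T S :: "'a \<Rightarrow> 'a"
  assumes sp: "space M = UNIV" and sf: "sigma_finite_measure M"
    and iT: "invertible_map M T" and mpT: "measure_preserving M T"
    and erg: "ergodic M T" and swre: "subseq_weakly_rationally_ergodic M T"
    and nsS: "nonsingular M S" and comm: "\<forall>x\<in>space M. S (T x) = T (S x)"
  shows "measure_preserving M S"
proof -
  interpret sigma_finite_measure M by (rule sf)
  have bijT: "bij T" using iT sp by (simp add: invertible_map_def)
  have mT[measurable]: "T \<in> measurable M M" using iT by (simp add: invertible_map_def)
  have mTi: "the_inv_into UNIV T \<in> measurable M M" using iT sp by (simp add: invertible_map_def)
  have iS: "invertible_map M S" using nsS by (simp add: nonsingular_def)
  have bijS: "bij S" using iS sp by (simp add: invertible_map_def)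
  have mS[measurable]: "S \<in> measurable M M" using iS by (simp add: invertible_map_def)
  have mSi: "the_inv_into UNIV S \<in> measurable M M" using iS sp by (simp add: invertible_map_def)
  have nsS0: "\<And>A. A \<in> sets M \<Longrightarrow> emeasure M A = 0 \<longleftrightarrow> emeasure M (S ` A) = 0"
    using nsS by (simp add: nonsingular_def)
  have commx: "\<And>x. S (T x) = T (S x)" using comm sp by auto
  have mTn[measurable]: "\<And>n. T^^n \<in> measurable M M" using funpow_measurable[OF mT] by blast
  have vsets: "\<And>g B. g \<in> measurable M M \<Longrightarrow> B \<in> sets M \<Longrightarrow> g -` B \<in> sets M"
    using sp by (metis Int_UNIV_right measurable_sets)
  have Simg: "\<And>B. B \<in> sets M \<Longrightarrow> S ` B \<in> sets M"
    using bij_image_vimage[OF bijS] vsets[OF mSi] by simp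
  have Timg: "\<And>k B. B \<in> sets M \<Longrightarrow> (T^^k) ` B \<in> sets M"
    using funpow_image_vimage[OF bijT] vsets[OF funpow_measurable[OF mTi]] by simp
  have Tk_pres: "\<And>k B. B \<in> sets M \<Longrightarrow> emeasure M ((T^^k) -` B) = emeasure M B"
    using mp_funpow[OF mpT sp] sp by (simp add: measure_preserving_def)
  have Tk_img: "\<And>k B. B \<in> sets M \<Longrightarrow> emeasure M ((T^^k) ` B) = emeasure M B"
  proof -
    fix k B assume B: "B \<in> sets M"
    have "(T^^k) -` ((T^^k) ` B) = B" using bijT by (simp add: bij_def inj_vimage_image_eq)
    then show "emeasure M ((T^^k) ` B) = emeasure M B" using Tk_pres[of "(T^^k) ` B" k] Timg[OF B, of k] by simp
  qed
  have T_img: "\<And>B. B \<in> sets M \<Longrightarrow> emeasure M (T ` B) = emeasure M B"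
    using Tk_img[of _ 1] by simp
  define N where "N = distr M M S"
  have setsN: "sets N = sets M" unfolding N_def by simp
  have N_eq: "\<And>A. A \<in> sets M \<Longrightarrow> emeasure N A = emeasure M (S -` A)"
    unfolding N_def using sp by (simp add: emeasure_distr)
  have Snull: "\<And>A. A \<in> sets M \<Longrightarrow> emeasure M A = 0 \<Longrightarrow> emeasure M (S -` A) = 0"
  proof -
    fix A assume A: "A \<in> sets M" "emeasure M A = 0"
    have "S ` (S -` A) = A" using bijS by (simp add: bij_def surj_image_vimage_eq)
    then show "emeasure M (S -` A) = 0" using nsS0[OF vsets[OF mS A(1)]] A by simp
  qed
  have ac: "absolutely_continuous M N"
    unfolding absolutely_continuous_def
  proof
    fix A assume "A \<in> null_sets M"
    then show "A \<in> null_sets N" using Snull N_eq setsN by (auto simp: null_sets_def)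
  qed
  obtain f where f[measurable]: "f \<in> borel_measurable M" and dens: "density M f = N"
    using Radon_Nikodym[OF ac setsN] by blast
  have Nf: "\<And>A. A \<in> sets M \<Longrightarrow> emeasure M (S -` A) = (\<integral>\<^sup>+x. f x * indicator A x \<partial>M)"
    using dens N_eq by (metis emeasure_density f)
  have densT: "density M (\<lambda>x. f (T x)) = density M f"
  proof (rule measure_eqI)
    show "sets (density M (\<lambda>x. f (T x))) = sets (density M f)" by simp
    fix A assume "A \<in> sets (density M (\<lambda>x. f (T x)))"
    then have A: "A \<in> sets M" by simp
    have "emeasure (density M (\<lambda>x. f (T x))) A = (\<integral>\<^sup>+x. f (T x) * indicator A x \<partial>M)"
      using A by (simp add: emeasure_density)
    also have "\<dots> = (\<integral>\<^sup>+x. f (T x) * indicator (T ` A) (T x) \<partial>M)"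
      using bijT by (simp add: bij_def inj_image_mem_iff indicator_def)
    also have "\<dots> = (\<integral>\<^sup>+y. f y * indicator (T ` A) y \<partial>distr M M T)"
      using Timg[OF A, of 1] by (subst nn_integral_distr) auto
    also have "\<dots> = (\<integral>\<^sup>+y. f y * indicator (T ` A) y \<partial>M)"
      using distr_mp[OF mpT sp] by simp
    also have "\<dots> = emeasure M (S -` (T ` A))" using Nf Timg[OF A, of 1] by simp
    also have "S -` (T ` A) = T ` (S -` A)"
      using comm_image_vimage[OF bijS bijT, of A] commx by simp
    also have "emeasure M (T ` (S -` A)) = emeasure M (S -` A)"
      using T_img vsets[OF mS A] by simp
    also have "\<dots> = emeasure (density M f) A" using Nf A by (simp add: emeasure_density)
    finally show "emeasure (density M (\<lambda>x. f (T x))) A = emeasure (density M f) A" .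
  qed
  have AEfT: "AE x in M. f (T x) = f x"
    by (rule density_unique[OF _ f densT]) simp
  have AEfTk: "\<And>k. AE x in M. f ((T^^k) x) = f x"
  proof -
    fix k show "AE x in M. f ((T^^k) x) = f x"
    proof (induction k)
      case 0 then show ?case by simp
    next
      case (Suc k)
      have "AE y in distr M M (T^^k). f (T y) = f y"
        using distr_mp[OF mp_funpow[OF mpT sp] sp, of k] AEfT by metis
      then have "AE x in M. f (T ((T^^k) x)) = f ((T^^k) x)"
        by (subst (asm) AE_distr_iff) auto
      with Suc show ?case by eventually_elim simp
    qed
  qed
  have AEall: "AE x in M. \<forall>k. f ((T^^k) x) = f x"
    using AEfTk by (simp add: AE_all_countable)
  have dich: "\<And>q. (AE x in M. f x \<le> q) \<or> (AE x in M. q < f x)"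
  proof -
    fix q :: ennreal
    define L where "L = {x \<in> space M. \<exists>N. \<forall>n\<ge>N. q < f ((T^^n) x)}"
    have Ls: "L \<in> sets M" unfolding L_def by measurable
    have LT: "T -` L \<inter> space M = L"
    proof -
      have "\<And>x. (\<exists>N. \<forall>n\<ge>N. q < f ((T^^n) (T x))) \<longleftrightarrow> (\<exists>N. \<forall>n\<ge>N. q < f ((T^^n) x))"
      proof -
        fix x
        have e: "\<And>n. (T^^n) (T x) = (T^^Suc n) x" by (simp add: funpow_swap1)
        show "(\<exists>N. \<forall>n\<ge>N. q < f ((T^^n) (T x))) \<longleftrightarrow> (\<exists>N. \<forall>n\<ge>N. q < f ((T^^n) x))"
        proof
          assume "\<exists>N. \<forall>n\<ge>N. q < f ((T^^n) (T x))"
          then obtain N where "\<forall>n\<ge>N. q < f ((T^^n) (T x))" by blast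
          then have "\<forall>n\<ge>Suc N. q < f ((T^^n) x)" unfolding e
            by (metis Suc_le_D Suc_le_mono)
          then show "\<exists>N. \<forall>n\<ge>N. q < f ((T^^n) x)" by blast
        next
          assume "\<exists>N. \<forall>n\<ge>N. q < f ((T^^n) x)"
          then obtain N where "\<forall>n\<ge>N. q < f ((T^^n) x)" by blast
          then have "\<forall>n\<ge>N. q < f ((T^^n) (T x))" unfolding e by (meson le_SucI)
          then show "\<exists>N. \<forall>n\<ge>N. q < f ((T^^n) (T x))" by blast
        qed
      qed
      then show ?thesis unfolding L_def using sp by auto
    qed
    have AEL: "AE x in M. x \<in> L \<longleftrightarrow> q < f x"
      using AEall
    proof eventually_elim
      case (elim x) then show ?case unfolding L_def using sp by auto
    qed
    from erg Ls LT have "emeasure M L = 0 \<or> emeasure M (space M - L) = 0"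
      by (simp add: ergodic_def)
    then show "(AE x in M. f x \<le> q) \<or> (AE x in M. q < f x)"
    proof
      assume "emeasure M L = 0"
      then have "AE x in M. x \<notin> L" using Ls by (intro AE_not_in) (simp add: null_sets_def)
      with AEL have "AE x in M. f x \<le> q" by eventually_elim auto
      then show ?thesis ..
    next
      assume "emeasure M (space M - L) = 0"
      then have "AE x in M. x \<in> L" using Ls AE_iff_measurable[of "space M - L" M "\<lambda>x. x \<in> L"]
        by auto
      with AEL have "AE x in M. q < f x" by eventually_elim auto
      then show ?thesis ..
    qed
  qed
  define c where "c = Inf {q. AE x in M. f x \<le> q}"
  have up: "\<And>r::rat. AE x in M. c < ennreal (real_of_rat r) \<longrightarrow> f x \<le> ennreal (real_of_rat r)"
  proof -
    fix r :: rat
    show "AE x in M. c < ennreal (real_of_rat r) \<longrightarrow> f x \<le> ennreal (real_of_rat r)"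
    proof (cases "c < ennreal (real_of_rat r)")
      case True
      then obtain q where q: "AE x in M. f x \<le> q" "q < ennreal (real_of_rat r)"
        unfolding c_def by (auto simp: Inf_less_iff)
      from q(1) show ?thesis by eventually_elim (use q(2) in auto)
    qed simp
  qed
  have lo: "\<And>r::rat. AE x in M. ennreal (real_of_rat r) < c \<longrightarrow> ennreal (real_of_rat r) < f x"
  proof -
    fix r :: rat
    show "AE x in M. ennreal (real_of_rat r) < c \<longrightarrow> ennreal (real_of_rat r) < f x"
    proof (cases "ennreal (real_of_rat r) < c")
      case True
      have "\<not> (AE x in M. f x \<le> ennreal (real_of_rat r))"
      proof
        assume "AE x in M. f x \<le> ennreal (real_of_rat r)"
        then have "c \<le> ennreal (real_of_rat r)" unfolding c_def by (auto intro: Inf_lower)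
        with True show False by simp
      qed
      with dich have "AE x in M. ennreal (real_of_rat r) < f x" by blast
      then show ?thesis by eventually_elim simp
    qed simp
  qed
  have AEc: "AE x in M. f x = c"
  proof -
    have "AE x in M. \<forall>r::rat. c < ennreal (real_of_rat r) \<longrightarrow> f x \<le> ennreal (real_of_rat r)"
      using up by (simp add: AE_all_countable)
    moreover have "AE x in M. \<forall>r::rat. ennreal (real_of_rat r) < c \<longrightarrow> ennreal (real_of_rat r) < f x"
      using lo by (simp add: AE_all_countable)
    ultimately show ?thesis
    proof eventually_elim
      case (elim x)
      have "\<not> c < f x"
      proof
        assume "c < f x"
        then obtain r where "c < ennreal (real_of_rat r)" "ennreal (real_of_rat r) < f x"
          using ennreal_rat_dense by blast
        with elim(1) show False by force
      qed
      moreover have "\<not> f x < c"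
      proof
        assume "f x < c"
        then obtain r where "f x < ennreal (real_of_rat r)" "ennreal (real_of_rat r) < c"
          using ennreal_rat_dense by blast
        with elim(2) show False by force
      qed
      ultimately show ?case by auto
    qed
  qed
  have Nc: "\<And>A. A \<in> sets M \<Longrightarrow> emeasure M (S -` A) = c * emeasure M A"
  proof -
    fix A assume A: "A \<in> sets M"
    have "emeasure M (S -` A) = (\<integral>\<^sup>+x. f x * indicator A x \<partial>M)" by (rule Nf[OF A])
    also have "\<dots> = (\<integral>\<^sup>+x. c * indicator A x \<partial>M)"
      using AEc by (intro nn_integral_cong_AE) auto
    also have "\<dots> = c * emeasure M A" using A by (rule nn_integral_cmult_indicator)
    finally show "emeasure M (S -` A) = c * emeasure M A" .
  qed
  obtain n F where Fs: "F \<in> sets M" and Fpos: "0 < emeasure M F" and Ffin: "emeasure M F < \<infinity>"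
    and Fcov: "emeasure M (space M - (\<Union>i. (T^^i) ` F)) = 0"
    and lim: "\<And>A B. A \<in> sets M \<Longrightarrow> B \<in> sets M \<Longrightarrow> A \<subseteq> F \<Longrightarrow> B \<subseteq> F \<Longrightarrow>
          (\<lambda>i. (1 / a_seq M T F (n i)) * (\<Sum>k<n i. measure M (A \<inter> (T^^k) ` B)))
            \<longlonglongrightarrow> measure M A * measure M B"
    using swre unfolding subseq_weakly_rationally_ergodic_def by blast
  have SFs: "S ` F \<in> sets M" using Simg[OF Fs] .
  have SFpos: "emeasure M (S ` F) \<noteq> 0" using nsS0[OF Fs] Fpos by auto
  have "\<exists>i. emeasure M (S ` F \<inter> (T^^i) ` F) \<noteq> 0"
  proof (rule ccontr)
    assume "\<not> ?thesis"
    then have z: "\<And>i. S ` F \<inter> (T^^i) ` F \<in> null_sets M"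
      using SFs Timg[OF Fs] by (auto simp: null_sets_def)
    have "(\<Union>i. S ` F \<inter> (T^^i) ` F) \<in> null_sets M" using z by blast
    moreover have "space M - (\<Union>i. (T^^i) ` F) \<in> null_sets M"
      using Fcov Timg[OF Fs] by (auto simp: null_sets_def)
    ultimately have "(\<Union>i. S ` F \<inter> (T^^i) ` F) \<union> (space M - (\<Union>i. (T^^i) ` F)) \<in> null_sets M"
      by blast
    moreover have "S ` F \<subseteq> (\<Union>i. S ` F \<inter> (T^^i) ` F) \<union> (space M - (\<Union>i. (T^^i) ` F))"
      using sp by auto
    ultimately have "S ` F \<in> null_sets M" using SFs by (blast intro: null_sets_subset)
    with SFpos show False by (simp add: null_sets_def)
  qed
  then obtain i where ipos: "emeasure M (S ` F \<inter> (T^^i) ` F) \<noteq> 0" by blast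
  define A' where "A' = S ` F \<inter> (T^^i) ` F"
  have A's: "A' \<in> sets M" unfolding A'_def using SFs Timg[OF Fs] by blast
  have A'fin: "emeasure M A' < \<infinity>"
  proof -
    have "emeasure M A' \<le> emeasure M ((T^^i) ` F)"
      unfolding A'_def using Timg[OF Fs] by (intro emeasure_mono) auto
    then show ?thesis using Tk_img[OF Fs, of i] Ffin by simp
  qed
  define C where "C = S -` A'"
  define D where "D = (T^^i) -` A'"
  have Cs: "C \<in> sets M" unfolding C_def using vsets[OF mS A's] .
  have Ds: "D \<in> sets M" unfolding D_def using vsets[OF mTn A's] .
  have CF: "C \<subseteq> F" unfolding C_def A'_def using bijS by (auto simp: bij_def dest: injD)
  have injTi: "inj (T^^i)" using bijT by (simp add: bij_def)
  have DF: "D \<subseteq> F" unfolding D_def A'_def using injTi by (auto dest: injD)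
  have bijTk: "\<And>k. bij (T^^k)" using bijT by simp
  have Cint: "\<And>k. C \<inter> (T^^k) ` C = S -` (A' \<inter> (T^^k) ` A')"
  proof -
    fix k
    have "(T^^k) ` C = S -` ((T^^k) ` A')" unfolding C_def
      by (rule comm_image_vimage[OF bijS bijTk]) (rule funpow_comm, rule commx)
    then show "C \<inter> (T^^k) ` C = S -` (A' \<inter> (T^^k) ` A')" unfolding C_def by auto
  qed
  have Dint: "\<And>k. D \<inter> (T^^k) ` D = (T^^i) -` (A' \<inter> (T^^k) ` A')"
  proof -
    fix k
    have "(T^^k) ` D = (T^^i) -` ((T^^k) ` A')" unfolding D_def
      by (rule comm_image_vimage[OF bijTk bijTk]) (metis funpow_add add.commute comp_apply)
    then show "D \<inter> (T^^k) ` D = (T^^i) -` (A' \<inter> (T^^k) ` A')" unfolding D_def by auto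
  qed
  define c' where "c' = enn2real c"
  have IAs: "\<And>k. A' \<inter> (T^^k) ` A' \<in> sets M" using A's Timg by blast
  have mC: "\<And>k. measure M (C \<inter> (T^^k) ` C) = c' * measure M (A' \<inter> (T^^k) ` A')"
    unfolding Cint measure_def c'_def using Nc[OF IAs] by (simp add: enn2real_mult)
  have mD: "\<And>k. measure M (D \<inter> (T^^k) ` D) = measure M (A' \<inter> (T^^k) ` A')"
    unfolding Dint measure_def using Tk_pres[OF IAs] by simp
  have mC0: "measure M C = c' * measure M A'"
    unfolding C_def measure_def c'_def using Nc[OF A's] by (simp add: enn2real_mult)
  have mD0: "measure M D = measure M A'"
    unfolding D_def measure_def using Tk_pres[OF A's] by simp
  define sq where "sq = (\<lambda>j. (1 / a_seq M T F (n j)) * (\<Sum>k<n j. measure M (A' \<inter> (T^^k) ` A')))"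
  have l1: "(\<lambda>j. c' * sq j) \<longlonglongrightarrow> measure M C * measure M C"
    using lim[OF Cs Cs CF CF] unfolding sq_def mC by (simp add: sum_distrib_left mult_ac)
  have l2: "sq \<longlonglongrightarrow> measure M D * measure M D"
    using lim[OF Ds Ds DF DF] unfolding sq_def mD by simp
  have l3: "(\<lambda>j. c' * sq j) \<longlonglongrightarrow> c' * (measure M D * measure M D)"
    by (intro tendsto_mult_left l2)
  have eq: "(c' * measure M A') * (c' * measure M A') = c' * (measure M A' * measure M A')"
    using LIMSEQ_unique[OF l1 l3] mC0 mD0 by simp
  have mApos: "measure M A' > 0"
    using ipos A'fin unfolding A'_def measure_def by (simp add: enn2real_positive_iff less_top zero_less_iff_neq_zero)
  have "c' * c' = c'" using eq mApos by (simp add: algebra_simps)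
  then have c'01: "c' = 0 \<or> c' = 1" by (metis mult_cancel_right1 mult_zero_left)
  have cfin: "c \<noteq> \<infinity>"
  proof
    assume "c = \<infinity>"
    have "emeasure M C = c * emeasure M A'" unfolding C_def by (rule Nc[OF A's])
    also have "\<dots> = \<infinity>" using \<open>c = \<infinity>\<close> ipos unfolding A'_def by (simp add: ennreal_mult_top)
    finally have "emeasure M C = \<infinity>" .
    moreover have "emeasure M C \<le> emeasure M F" using CF Fs by (intro emeasure_mono)
    ultimately show False using Ffin by simp
  qed
  have "c' \<noteq> 0"
  proof
    assume "c' = 0"
    then have "c = 0" using cfin unfolding c'_def by (simp add: enn2real_eq_0_iff)
    then have "emeasure M C = 0" unfolding C_def using Nc[OF A's] by simp
    then have "emeasure M (S ` C) = 0" using nsS0[OF Cs] by simp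
    moreover have "S ` C = A'" unfolding C_def using bijS by (simp add: bij_def surj_image_vimage_eq)
    ultimately show False using ipos unfolding A'_def by simp
  qed
  with c'01 have "c' = 1" by simp
  moreover have "c = ennreal c'" using cfin unfolding c'_def by (simp add: less_top)
  ultimately have c1: "c = 1" by simp
  show ?thesis unfolding measure_preserving_def
  proof (intro conjI ballI)
    show "S \<in> measurable M M" by (rule mS)
    fix A assume "A \<in> sets M"
    then show "emeasure M (S -` A \<inter> space M) = emeasure M A" using Nc c1 sp by simp
  qed
qed


theorem mainTheorem6:
  fixes M :: "('a::polish_space) measure" and T :: "'a \<Rightarrow> 'a"
  assumes "standard_borel_space M" and "sigma_finite_measure M" and "nonatomic M"
    and "invertible_map M T" and "measure_preserving M T"
    and "conservative M T" and "ergodic M T"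
    and "subseq_weakly_rationally_ergodic M T"
  shows "(\<forall>S. nonsingular M S \<and> (\<forall>x\<in>space M. S (T x) = T (S x)) \<longrightarrow> measure_preserving M S)
         \<and> \<not> squashable M T"
proof -
  have sp: "space M = UNIV" using assms(1) by (simp add: standard_borel_space_def)
  have *: "\<forall>S. nonsingular M S \<and> (\<forall>x\<in>space M. S (T x) = T (S x)) \<longrightarrow> measure_preserving M S"
    using main_mp[OF sp assms(2) assms(4) assms(5) assms(7) assms(8)] by blast
  then show ?thesis unfolding squashable_def by blast
qed

end
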